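(* Let $\mathcal{A}'\subsetneq\mathcal{A}$ be finite alphabets, $\Omega$ a prefix extension from $\mathcal{A}'$ to $\mathcal{A}$ given by words $\{\omega_{\varepsilon,b}\}_{\varepsilon\in\{0,1\},b\in\mathcal{A}'}$, and $\mathbf{p}=(p_0,p_1)$ an irreducible pair on $\mathcal{A}'$ with $a_\varepsilon=p_\varepsilon^{-1}(1)$. Then $\Omega(\mathbf{p})$ is irreducible if and only if there is no $k>0$ such that the first $k$ letters of $\omega_{0,a_0}$ and the first $k$ letters of $\omega_{1,a_1}$ form the same set.
   Context: A pair on an alphabet $\mathcal{B}$ with $m=\#\mathcal{B}$ is $(q_0,q_1)$ with $q_0,q_1:\mathcal{B}\to\{1,\dots,m\}$ bijections; row $\varepsilon$ is the word $q_\varepsilon^{-1}(1)\cdots q_\varepsilon^{-1}(m)$. It is irreducible if $q_0^{-1}\{1,\dots,k\}\ne q_1^{-1}\{1,\dots,k\}$ for all $1\le k<m$. A word is an ordered collection of distinct letters. A prefix extension from $\mathcal{A}'$ to $\mathcal{A}$ is a choice of words $\omega_{\varepsilon,b}$ ($\varepsilon\in\{0,1\}$, $b\in\mathcal{A}'$) such that: each $\omega_{\varepsilon,b}=u\,b$ with $u$ a possibly empty word in letters of $\mathcal{A}\setminus\mathcal{A}'$; for each $\varepsilon$, every letter of $\mathcal{A}$ appears in some $\omega_{\varepsilon,b}$; and for each $\varepsilon$ and $b\ne c$, $\omega_{\varepsilon,b}$ and $\omega_{\varepsilon,c}$ share no letter. For a pair $\mathbf{p}$ on $\mathcal{A}'$,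 $\Omega(\mathbf{p})$ is the pair on $\mathcal{A}$ whose row $\varepsilon$ is obtained from row $\varepsilon$ of $\mathbf{p}$ by replacing each letter $b$ by the word $\omega_{\varepsilon,b}$. *)

theory Defs
  imports Main
begin

definition is_pair :: "'a set \<Rightarrow> ('a \<Rightarrow> nat) \<Rightarrow> ('a \<Rightarrow> nat) \<Rightarrow> bool" where
  "is_pair B q0 q1 \<longleftrightarrow> finite B \<and> bij_betw q0 B {1..card B} \<and> bij_betw q1 B {1..card B}"

definition irreducible_pair :: "'a set \<Rightarrow> ('a \<Rightarrow> nat) \<Rightarrow> ('a \<Rightarrow> nat) \<Rightarrow> bool" where
  "irreducible_pair B q0 q1 \<longleftrightarrow> is_pair B q0 q1 \<and>
     (\<forall>k. 1 \<le> k \<and> k < card B \<longrightarrow> {b\<in>B. q0 b \<in> {1..k}} \<noteq> {b\<in>B. q1 b \<in> {1..k}})"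

definition row :: "'a set \<Rightarrow> ('a \<Rightarrow> nat) \<Rightarrow> 'a list" where
  "row B q = map (inv_into B q) [1..<Suc (card B)]"

definition word_to_bij :: "'a list \<Rightarrow> 'a \<Rightarrow> nat" where
  "word_to_bij xs = (\<lambda>a. Suc (THE i. i < length xs \<and> xs ! i = a))"

definition prefix_ext_side :: "'a set \<Rightarrow> 'a set \<Rightarrow> ('a \<Rightarrow> 'a list) \<Rightarrow> bool" where
  "prefix_ext_side A A' w \<longleftrightarrow>
     (\<forall>b\<in>A'. distinct (w b) \<and> (\<exists>u. w b = u @ [b] \<and> set u \<subseteq> A - A')) \<and>
     A \<subseteq> (\<Union>b\<in>A'. set (w b)) \<and>
     (\<forall>b\<in>A'. \<forall>c\<in>A'. b \<noteq> c \<longrightarrow> set (w b) \<inter> set (w c) = {})"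

definition prefix_extension :: "'a set \<Rightarrow> 'a set \<Rightarrow> ('a \<Rightarrow> 'a list) \<Rightarrow> ('a \<Rightarrow> 'a list) \<Rightarrow> bool" where
  "prefix_extension A A' w0 w1 \<longleftrightarrow> prefix_ext_side A A' w0 \<and> prefix_ext_side A A' w1"

text \<open>Row epsilon of Omega(p): replace each letter b of row epsilon of p by the word w_epsilon(b).\<close>
definition Omega_side :: "'a set \<Rightarrow> ('a \<Rightarrow> 'a list) \<Rightarrow> ('a \<Rightarrow> nat) \<Rightarrow> 'a \<Rightarrow> nat" where
  "Omega_side A' w q = word_to_bij (concat (map w (row A' q)))"

end

theory Submission
  imports Defs
begin


lemma wtb_nth: "distinct xs \<Longrightarrow> i < length xs \<Longrightarrow> word_to_bij xs (xs!i) = Suc i"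
  unfolding word_to_bij_def by (rule arg_cong[where f=Suc], rule the_equality) (auto simp: nth_eq_iff_index_eq)

lemma wtb_bij: assumes "distinct xs" shows "bij_betw (word_to_bij xs) (set xs) {1..length xs}"
  unfolding bij_betw_def
proof
  show "inj_on (word_to_bij xs) (set xs)"
    by (auto simp: inj_on_def in_set_conv_nth wtb_nth assms)
  show "word_to_bij xs ` set xs = {1..length xs}"
  proof
    show "word_to_bij xs ` set xs \<subseteq> {1..length xs}"
      by (auto simp: in_set_conv_nth wtb_nth assms)
    show "{1..length xs} \<subseteq> word_to_bij xs ` set xs"
    proof
      fix m assume "m \<in> {1..length xs}"
      then have "m - 1 < length xs" "m = Suc (m - 1)" by auto
      then show "m \<in> word_to_bij xs ` set xs"
        by (metis assms image_eqI nth_mem wtb_nth)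
    qed
  qed
qed

lemma wtb_take: assumes "distinct xs"
  shows "{a \<in> set xs. word_to_bij xs a \<in> {1..k}} = set (take k xs)"
proof (rule set_eqI)
  fix a
  show "a \<in> {a \<in> set xs. word_to_bij xs a \<in> {1..k}} \<longleftrightarrow> a \<in> set (take k xs)"
  proof
    assume "a \<in> {a \<in> set xs. word_to_bij xs a \<in> {1..k}}"
    then obtain i where "i < length xs" "a = xs ! i" "Suc i \<le> k"
      by (auto simp: in_set_conv_nth wtb_nth assms)
    then show "a \<in> set (take k xs)" by (auto simp: in_set_conv_nth)
  next
    assume "a \<in> set (take k xs)"
    then obtain i where "i < length xs" "a = xs ! i" "i < k"
      by (auto simp: in_set_conv_nth)
    then show "a \<in> {a \<in> set xs. word_to_bij xs a \<in> {1..k}}"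
      by (auto simp: wtb_nth assms)
  qed
qed



lemma row_facts:
  assumes bij: "bij_betw p A' {1..card A'}"
  shows "length (row A' p) = card A'" "distinct (row A' p)" "set (row A' p) = A'"
    "\<And>i. i < card A' \<Longrightarrow> row A' p ! i = inv_into A' p (Suc i)"
    "\<And>b. b \<in> A' \<Longrightarrow> word_to_bij (row A' p) b = p b"
proof -
  have bi: "bij_betw (inv_into A' p) {1..card A'} A'" using bij_betw_inv_into[OF bij] .
  have st: "set [1..<Suc (card A')] = {1..card A'}" by auto
  show l: "length (row A' p) = card A'" by (simp add: row_def)
  have inj: "inj_on (inv_into A' p) {1..card A'}" using bi bij_betw_def by blast
  show d: "distinct (row A' p)" unfolding row_def distinct_map st
    using inj by (simp del: upt_Suc)
  show "set (row A' p) = A'" unfolding row_def set_map st using bi by (simp add: bij_betw_def)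
  show n: "\<And>i. i < card A' \<Longrightarrow> row A' p ! i = inv_into A' p (Suc i)"
    by (simp add: row_def del: upt_Suc)
  fix b assume b: "b \<in> A'"
  then have pb: "p b \<in> {1..card A'}" using bij by (auto simp: bij_betw_def)
  have q: "p b - 1 < card A'" "Suc (p b - 1) = p b" using pb by auto
  have r: "row A' p ! (p b - 1) = b"
    using n[of "p b - 1"] bij_betw_inv_into_left[OF bij b] q by simp
  have "p b - 1 < length (row A' p)" using q(1) l by simp
  from wtb_nth[OF d this] show "word_to_bij (row A' p) b = p b" unfolding r q(2) .
qed



lemma concat_take:
  assumes "\<forall>x\<in>set xs. \<exists>u. ws x = u @ [x] \<and> set u \<inter> X = {}" "set xs \<subseteq> X"
  shows "\<exists>j\<le>length xs. set (take k (concat (map ws xs))) \<inter> X = set (take j xs) \<and>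
     (j = 0 \<and> xs \<noteq> [] \<longrightarrow> k < length (ws (hd xs)) \<and> take k (concat (map ws xs)) = take k (ws (hd xs)))"
  using assms
proof (induction xs arbitrary: k)
  case Nil
  then show ?case by simp
next
  case (Cons x xs)
  obtain u where u: "ws x = u @ [x]" "set u \<inter> X = {}" using Cons.prems by auto
  have xX: "x \<in> X" using Cons.prems by auto
  show ?case
  proof (cases "k < length (ws x)")
    case True
    then have "k \<le> length u" using u by simp
    then have "take k (ws x) = take k u" using u by simp
    then have "set (take k (ws x)) \<subseteq> set u" using set_take_subset[of k u] by simp
    then have e: "set (take k (ws x)) \<inter> X = {}" using u(2) by blast
    have "take k (concat (map ws (x#xs))) = take k (ws x)" using True by simp
    then show ?thesis using True e by (intro exI[of _ 0]) simp
  next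
    case False
    obtain j where j: "j \<le> length xs" "set (take (k - length (ws x)) (concat (map ws xs))) \<inter> X = set (take j xs)"
    proof -
      have p1: "\<forall>y\<in>set xs. \<exists>u. ws y = u @ [y] \<and> set u \<inter> X = {}" using Cons.prems(1) by simp
      have p2: "set xs \<subseteq> X" using Cons.prems(2) by simp
      from Cons.IH[OF p1 p2, of "k - length (ws x)"] show ?thesis using that by blast
    qed
    have "take k (concat (map ws (x#xs))) = ws x @ take (k - length (ws x)) (concat (map ws xs))"
      using False by simp
    then have "set (take k (concat (map ws (x#xs)))) \<inter> X
        = (set (ws x) \<inter> X) \<union> (set (take (k - length (ws x)) (concat (map ws xs))) \<inter> X)"
      by (simp only: set_append Int_Un_distrib2)
    also have "set (ws x) \<inter> X = {x}" using u xX by auto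
    finally have "set (take k (concat (map ws (x#xs)))) \<inter> X = set (take (Suc j) (x#xs))"
      using j(2) by simp
    then show ?thesis using j(1) by (intro exI[of _ "Suc j"]) simp
  qed
qed

lemma concat_last:
  assumes "xs \<noteq> []" "\<forall>x\<in>set xs. \<exists>u. ws x = u @ [x]"
  shows "last (concat (map ws xs)) = last xs"
proof -
  have e: "xs = butlast xs @ [last xs]" using assms by simp
  obtain u where "ws (last xs) = u @ [last xs]" using assms(2) last_in_set[OF assms(1)] by blast
  then have "concat (map ws xs) = concat (map ws (butlast xs)) @ u @ [last xs]"
    by (subst e) simp
  then show ?thesis by simp
qed




lemma side_facts:
  assumes S: "prefix_ext_side A A' w" and bij: "bij_betw p A' {1..card A'}" and sub: "A' \<subseteq> A"
  defines "c \<equiv> concat (map w (row A' p))"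
  shows "distinct c" "set c = A" "length c = card A"
    "\<forall>x\<in>set (row A' p). \<exists>u. w x = u @ [x] \<and> set u \<inter> A' = {}"
proof -
  have sr: "set (row A' p) = A'" "distinct (row A' p)" using row_facts[OF bij] by auto
  have wb: "\<And>b. b \<in> A' \<Longrightarrow> distinct (w b) \<and> (\<exists>u. w b = u @ [b] \<and> set u \<subseteq> A - A')"
    using S unfolding prefix_ext_side_def by blast
  have cov: "A \<subseteq> (\<Union>b\<in>A'. set (w b))" using S unfolding prefix_ext_side_def by blast
  have disj: "\<And>b c. b \<in> A' \<Longrightarrow> c \<in> A' \<Longrightarrow> b \<noteq> c \<Longrightarrow> set (w b) \<inter> set (w c) = {}"
    using S unfolding prefix_ext_side_def by blast
  have wsub: "\<And>b. b \<in> A' \<Longrightarrow> set (w b) \<subseteq> A"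
    using wb sub by fastforce
  have wd: "\<And>b. b \<in> A' \<Longrightarrow> distinct (w b)" using wb by blast
  have bin: "\<And>b. b \<in> A' \<Longrightarrow> b \<in> set (w b)" using wb by fastforce
  show "\<forall>x\<in>set (row A' p). \<exists>u. w x = u @ [x] \<and> set u \<inter> A' = {}"
    using wb sr by fastforce
  have "set c = (\<Union>b\<in>A'. set (w b))" unfolding c_def using sr by simp
  then show sc: "set c = A" using cov wsub by blast
  have inj: "inj_on w A'"
  proof (rule inj_onI)
    fix b c assume "b \<in> A'" "c \<in> A'" "w b = w c"
    show "b = c"
    proof (rule ccontr)
      assume "b \<noteq> c"
      then have "set (w b) \<inter> set (w c) = {}" using disj \<open>b \<in> A'\<close> \<open>c \<in> A'\<close> by blast
      moreover have "b \<in> set (w b)" using bin \<open>b \<in> A'\<close> by blast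
      ultimately show False using \<open>w b = w c\<close> by simp
    qed
  qed
  show dc: "distinct c" unfolding c_def
  proof (rule distinct_concat)
    show "distinct (map w (row A' p))" using sr inj by (simp add: distinct_map)
    show "\<And>ys. ys \<in> set (map w (row A' p)) \<Longrightarrow> distinct ys" using wd sr by auto
    show "\<And>ys zs. ys \<in> set (map w (row A' p)) \<Longrightarrow> zs \<in> set (map w (row A' p)) \<Longrightarrow> ys \<noteq> zs \<Longrightarrow> set ys \<inter> set zs = {}"
      using disj sr by auto
  qed
  show "length c = card A" using distinct_card[OF dc] sc by simp
qed



theorem lemma2p24:
  fixes A A' :: "'a set" and w0 w1 :: "'a \<Rightarrow> 'a list" and p0 p1 :: "'a \<Rightarrow> nat" and a0 a1 :: 'a
  assumes "finite A" and "A' \<subset> A"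
    and "prefix_extension A A' w0 w1"
    and "irreducible_pair A' p0 p1"
    and "a0 = inv_into A' p0 1" and "a1 = inv_into A' p1 1"
  shows "irreducible_pair A (Omega_side A' w0 p0) (Omega_side A' w1 p1) \<longleftrightarrow>
         \<not> (\<exists>k>0. k \<le> length (w0 a0) \<and> k \<le> length (w1 a1) \<and>
                 set (take k (w0 a0)) = set (take k (w1 a1)))"
proof -
  have fin': "finite A'" and bij0: "bij_betw p0 A' {1..card A'}" and bij1: "bij_betw p1 A' {1..card A'}"
    and irr: "\<And>k. 1 \<le> k \<Longrightarrow> k < card A' \<Longrightarrow> {b\<in>A'. p0 b \<in> {1..k}} \<noteq> {b\<in>A'. p1 b \<in> {1..k}}"
    using assms(4) unfolding irreducible_pair_def is_pair_def by auto
  have S0: "prefix_ext_side A A' w0" and S1: "prefix_ext_side A A' w1"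
    using assms(3) unfolding prefix_extension_def by auto
  have sub: "A' \<subseteq> A" "A' \<noteq> A" using assms(2) by auto
  define R0 where "R0 = row A' p0"
  define R1 where "R1 = row A' p1"
  define c0 where "c0 = concat (map w0 R0)"
  define c1 where "c1 = concat (map w1 R1)"
  note rf0 = row_facts[OF bij0, folded R0_def]
  note rf1 = row_facts[OF bij1, folded R1_def]
  note sf0 = side_facts[OF S0 bij0 sub(1), folded R0_def, folded c0_def]
  note sf1 = side_facts[OF S1 bij1 sub(1), folded R1_def, folded c1_def]
  have ne: "A' \<noteq> {}"
  proof
    assume "A' = {}"
    then have "A = {}" using S0 unfolding prefix_ext_side_def by auto
    then show False using sub \<open>A' = {}\<close> by simp
  qed
  then have cpos: "card A' > 0" using fin' by auto
  have R0ne: "R0 \<noteq> []" and R1ne: "R1 \<noteq> []" using rf0(3) rf1(3) ne by auto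
  have hd0: "hd R0 = a0" using rf0(4)[OF cpos] R0ne assms(5) by (simp add: hd_conv_nth)
  have hd1: "hd R1 = a1" using rf1(4)[OF cpos] R1ne assms(6) by (simp add: hd_conv_nth)
  have a0A: "a0 \<in> A'" using hd0 R0ne rf0(3) hd_in_set by blast
  have a1A: "a1 \<in> A'" using hd1 R1ne rf1(3) hd_in_set by blast
  have tk0: "\<And>j. {b\<in>A'. p0 b \<in> {1..j}} = set (take j R0)"
  proof -
    fix j
    have "{b\<in>A'. p0 b \<in> {1..j}} = {b\<in>set R0. word_to_bij R0 b \<in> {1..j}}"
      using rf0(3) rf0(5) by auto
    then show "{b\<in>A'. p0 b \<in> {1..j}} = set (take j R0)" using wtb_take[OF rf0(2)] by simp
  qed
  have tk1: "\<And>j. {b\<in>A'. p1 b \<in> {1..j}} = set (take j R1)"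
  proof -
    fix j
    have "{b\<in>A'. p1 b \<in> {1..j}} = {b\<in>set R1. word_to_bij R1 b \<in> {1..j}}"
      using rf1(3) rf1(5) by auto
    then show "{b\<in>A'. p1 b \<in> {1..j}} = set (take j R1)" using wtb_take[OF rf1(2)] by simp
  qed
  have irrR: "\<And>j. 1 \<le> j \<Longrightarrow> j < card A' \<Longrightarrow> set (take j R0) \<noteq> set (take j R1)"
    using irr tk0 tk1 by metis
  have O0: "Omega_side A' w0 p0 = word_to_bij c0" unfolding Omega_side_def c0_def R0_def ..
  have O1: "Omega_side A' w1 p1 = word_to_bij c1" unfolding Omega_side_def c1_def R1_def ..
  have iffO: "irreducible_pair A (Omega_side A' w0 p0) (Omega_side A' w1 p1) \<longleftrightarrow>
      (\<forall>k. 1 \<le> k \<and> k < card A \<longrightarrow> set (take k c0) \<noteq> set (take k c1))"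
  proof -
    have "is_pair A (word_to_bij c0) (word_to_bij c1)"
      unfolding is_pair_def using assms(1) wtb_bij[OF sf0(1)] wtb_bij[OF sf1(1)] sf0(2,3) sf1(2,3) by simp
    moreover have "\<And>k. {b\<in>A. word_to_bij c0 b \<in> {1..k}} = set (take k c0)"
      using wtb_take[OF sf0(1)] sf0(2) by simp
    moreover have "\<And>k. {b\<in>A. word_to_bij c1 b \<in> {1..k}} = set (take k c1)"
      using wtb_take[OF sf1(1)] sf1(2) by simp
    ultimately show ?thesis unfolding irreducible_pair_def O0 O1 by simp
  qed
  have c0e: "c0 = w0 a0 @ concat (map w0 (tl R0))" unfolding c0_def using R0ne hd0
    by (metis concat.simps(2) list.collapse list.simps(9))
  have c1e: "c1 = w1 a1 @ concat (map w1 (tl R1))" unfolding c1_def using R1ne hd1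
    by (metis concat.simps(2) list.collapse list.simps(9))
  obtain u0 where u0: "w0 a0 = u0 @ [a0]" "set u0 \<inter> A' = {}" using sf0(4) rf0(3) a0A by blast
  obtain u1 where u1: "w1 a1 = u1 @ [a1]" "set u1 \<inter> A' = {}" using sf1(4) rf1(3) a1A by blast
  show ?thesis
  proof
    assume L: "irreducible_pair A (Omega_side A' w0 p0) (Omega_side A' w1 p1)"
    show "\<not> (\<exists>k>0. k \<le> length (w0 a0) \<and> k \<le> length (w1 a1) \<and>
                 set (take k (w0 a0)) = set (take k (w1 a1)))"
    proof
      assume "\<exists>k>0. k \<le> length (w0 a0) \<and> k \<le> length (w1 a1) \<and> set (take k (w0 a0)) = set (take k (w1 a1))"
      then obtain k where k: "k > 0" "k \<le> length (w0 a0)" "k \<le> length (w1 a1)"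
        "set (take k (w0 a0)) = set (take k (w1 a1))" by blast
      have t0: "\<And>m. m \<le> length (w0 a0) \<Longrightarrow> take m c0 = take m (w0 a0)" using c0e by simp
      have t1: "\<And>m. m \<le> length (w1 a1) \<Longrightarrow> take m c1 = take m (w1 a1)" using c1e by simp
      have all: "\<forall>k. 1 \<le> k \<and> k < card A \<longrightarrow> set (take k c0) \<noteq> set (take k c1)" using L iffO by blast
      show False
      proof (cases "k < card A")
        case True
        then show ?thesis using all k t0 t1 by (metis One_nat_def Suc_leI)
      next
        case False
        have "length (w0 a0) \<le> card A" using c0e sf0(3) by simp
        then have k0: "k = length (w0 a0)" using k False by simp
        have "length (w1 a1) \<le> card A" using c1e sf1(3) by simp
        then have k1: "k = length (w1 a1)" using k False by simp
        have eqs: "set (w0 a0) = set (w1 a1)" using k k0 k1 by simp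
        have "a0 \<in> set (w0 a0)" using u0 by simp
        then have "a0 \<in> set (w1 a1) \<inter> A'" using eqs a0A by blast
        then have a01: "a0 = a1" using u1 by auto
        have dw0: "distinct (w0 a0)" using sf0(1) c0e by simp
        have dw1: "distinct (w1 a1)" using sf1(1) c1e by simp
        have "set u0 = set (w0 a0) - {a0}" using dw0 u0 by auto
        moreover have "set u1 = set (w1 a1) - {a1}" using dw1 u1 by auto
        ultimately have su: "set u0 = set u1" using eqs a01 by simp
        have cA: "card A \<ge> 2"
        proof -
          have "card A' \<le> card A" using card_mono[OF assms(1) sub(1)] .
          moreover have "card A' < card A" using psubset_card_mono[OF assms(1) assms(2)] .
          ultimately show ?thesis using cpos by simp
        qed
        have "k - 1 = length u0" "k - 1 = length u1" using k0 k1 u0 u1 by auto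
        then have "take (k - 1) c0 = u0" "take (k - 1) c1 = u1"
          using t0[of "k-1"] t1[of "k-1"] k u0 u1 by auto
        moreover have "1 \<le> k - 1" "k - 1 < card A" using k0 False cA \<open>length (w0 a0) \<le> card A\<close> by linarith+
        ultimately show False using all su by metis
      qed
    qed
  next
    assume R: "\<not> (\<exists>k>0. k \<le> length (w0 a0) \<and> k \<le> length (w1 a1) \<and>
                 set (take k (w0 a0)) = set (take k (w1 a1)))"
    have "\<forall>k. 1 \<le> k \<and> k < card A \<longrightarrow> set (take k c0) \<noteq> set (take k c1)"
    proof (intro allI impI notI)
      fix k assume k: "1 \<le> k \<and> k < card A" and eq: "set (take k c0) = set (take k c1)"
      obtain j0 where j0: "j0 \<le> length R0" "set (take k c0) \<inter> A' = set (take j0 R0)"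
        "j0 = 0 \<and> R0 \<noteq> [] \<longrightarrow> k < length (w0 (hd R0)) \<and> take k c0 = take k (w0 (hd R0))"
        using concat_take[OF sf0(4), of k] rf0(3) unfolding c0_def by auto
      obtain j1 where j1: "j1 \<le> length R1" "set (take k c1) \<inter> A' = set (take j1 R1)"
        "j1 = 0 \<and> R1 \<noteq> [] \<longrightarrow> k < length (w1 (hd R1)) \<and> take k c1 = take k (w1 (hd R1))"
        using concat_take[OF sf1(4), of k] rf1(3) unfolding c1_def by auto
      have st: "set (take j0 R0) = set (take j1 R1)" using j0 j1 eq by simp
      have "card (set (take j0 R0)) = j0" using j0(1) rf0(2) distinct_card[of "take j0 R0"] by simp
      moreover have "card (set (take j1 R1)) = j1" using j1(1) rf1(2) distinct_card[of "take j1 R1"] by simp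
      ultimately have jj: "j0 = j1" using st by simp
      show False
      proof (cases "j0 = 0")
        case True
        then have "k < length (w0 a0)" "take k c0 = take k (w0 a0)"
          "k < length (w1 a1)" "take k c1 = take k (w1 a1)"
          using j0(3) j1(3) jj R0ne R1ne hd0 hd1 by auto
        moreover have "\<not> (0 < k \<and> k \<le> length (w0 a0) \<and> k \<le> length (w1 a1) \<and> set (take k (w0 a0)) = set (take k (w1 a1)))"
          using R by blast
        ultimately show False using k eq by simp
      next
        case False
        show False
        proof (cases "j0 < card A'")
          case True
          then show False using irrR[of j0] False st jj by simp
        next
          case False
          then have "j0 = length R0" using j0(1) rf0(1) by simp
          then have "set (take k c0) \<inter> A' = set R0" using j0(2) by simp
          moreover have "last R0 \<in> set R0" using R0ne by simp
          ultimately have "last R0 \<in> set (take k c0)" by blast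
          moreover have "last c0 = last R0"
            using concat_last[of R0 w0] R0ne sf0(4) unfolding c0_def by blast
          ultimately have lin: "last c0 \<in> set (take k c0)" by simp
          have c0ne: "c0 \<noteq> []" using c0e u0 by simp
          obtain i where i: "i < length c0" "i < k" "c0 ! i = last c0"
            using lin by (auto simp: in_set_conv_nth)
          have "last c0 = c0 ! (length c0 - 1)" using c0ne by (simp add: last_conv_nth)
          then have "i = length c0 - 1" using i sf0(1) c0ne by (simp add: nth_eq_iff_index_eq)
          then show False using i k sf0(3) by simp
        qed
      qed
    qed
    then show "irreducible_pair A (Omega_side A' w0 p0) (Omega_side A' w1 p1)" using iffO by blast
  qed
qed


end
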